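(* Let $\alpha\ge0$ and let $P=\{p_0,p_1,\dots,p_k\}\subset\mathbb R^n$ with $p_0=0$ and $\|p_i\|\le\alpha$ for all $i$. Then for every $x\in\mathrm{CH}(P)$ there exists $p_i\in P$ with $\|x-p_i\|\le\alpha/\sqrt2$.
   Context: $\mathrm{CH}(P)$ denotes the convex hull of $P$; $\|\cdot\|$ is the Euclidean norm. *)

theory Defs
  imports "HOL-Analysis.Analysis"
begin

end

theory Submission
  imports Defs
begin

theorem lemma24:
  fixes P :: "(real ^ 'n) set" and \<alpha> :: real
  assumes "\<alpha> \<ge> 0"
    and "finite P"
    and "0 \<in> P"
    and "\<And>p. p \<in> P \<Longrightarrow> norm p \<le> \<alpha>"
    and "x \<in> convex hull P"
  shows "\<exists>p\<in>P. norm (x - p) \<le> \<alpha> / sqrt 2"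
proof -
  obtain u where u0: "\<forall>p\<in>P. 0 \<le> u p" and u1: "sum u P = 1"
    and ux: "(\<Sum>p\<in>P. u p *\<^sub>R p) = x"
    using assms(5) unfolding convex_hull_finite[OF assms(2)] by blast
  have ne: "P \<noteq> {}" using assms(3) by auto
  have fin: "finite ((\<lambda>p. norm (x - p)) ` P)" using assms(2) by simp
  have "Min ((\<lambda>p. norm (x - p)) ` P) \<in> (\<lambda>p. norm (x - p)) ` P"
    using Min_in[OF fin] ne by simp
  then obtain q where q: "q \<in> P" and qe: "norm (x - q) = Min ((\<lambda>p. norm (x - p)) ` P)" by auto
  have qmin: "\<And>p. p \<in> P \<Longrightarrow> norm (x - q) \<le> norm (x - p)"
    unfolding qe using fin by simp
  define m where "m = (norm (x - q))^2"
  have m1: "m \<le> (norm x)^2"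
    using qmin[OF assms(3)] unfolding m_def by (simp add: power_mono)
  have "m = (\<Sum>p\<in>P. u p * m)" using u1 by (simp add: sum_distrib_right[symmetric])
  also have "\<dots> \<le> (\<Sum>p\<in>P. u p * (norm (x - p))^2)"
    apply (rule sum_mono) using u0 qmin unfolding m_def
    by (simp add: mult_left_mono power_mono)
  also have "\<dots> = (\<Sum>p\<in>P. u p * ((norm x)^2 - 2 * (x \<bullet> p) + (norm p)^2))"
    apply (rule sum.cong) apply simp
    by (simp add: power2_norm_eq_inner inner_diff_left inner_diff_right inner_commute)
  also have "\<dots> = (norm x)^2 * sum u P - 2 * (x \<bullet> (\<Sum>p\<in>P. u p *\<^sub>R p)) + (\<Sum>p\<in>P. u p * (norm p)^2)"
    by (simp add: algebra_simps sum.distrib sum_subtractf sum_distrib_left sum_distrib_right inner_sum_right)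
  also have "\<dots> = (\<Sum>p\<in>P. u p * (norm p)^2) - (norm x)^2"
    using u1 ux by (simp add: power2_norm_eq_inner)
  also have "\<dots> \<le> (\<Sum>p\<in>P. u p * \<alpha>^2) - (norm x)^2"
    apply (simp, rule sum_mono) using u0 assms(4)
    by (simp add: mult_left_mono power_mono)
  also have "\<dots> = \<alpha>^2 - (norm x)^2" using u1 by (simp add: sum_distrib_right[symmetric])
  finally have "m \<le> \<alpha>^2 / 2" using m1 by simp
  hence "sqrt m \<le> sqrt (\<alpha>^2/2)" by simp
  moreover have "sqrt m = norm (x - q)" unfolding m_def by simp
  moreover have "sqrt (\<alpha>^2/2) = \<alpha> / sqrt 2" using assms(1) by (simp add: real_sqrt_divide)
  ultimately show ?thesis using q by auto
qed

end
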